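(* For all $0\leq i\leq k$, $$f_{k,i}(x)=(1+x)^{\binom{i}{2}}\prod_{\ell=i+1}^{k}\bigl((1+x)^{\ell}-1\bigr).$$
   Context: An inversion sequence of length $n$ is $e=e_1\ldots e_n$ with $0\le e_i<i$. $\mathrm{asc}(e_1\ldots e_i)=|\{\ell\in[i-1]:e_\ell<e_{\ell+1}\}|$. An ascent sequence is an inversion sequence with $e_{i+1}\le \mathrm{asc}(e_1\ldots e_i)+1$ for all $i$; it is primitive if $e_i\ne e_{i+1}$ for all $i$. Let $\mathcal{PA}$ be the set of primitive ascent sequences of all lengths $\geq1$. For primitive $e$, partition $e$ into maximal strictly decreasing consecutive blocks (runs); an entry is a tail if it is the last (smallest) entry of its run. Define $\mathrm{wt}(e)=\prod_{i=1}^{\mathrm{len}(e)}\mathrm{wt}(e_i)$ with $\mathrm{wt}(e_i)=1$ if $e_i$ is a tail and $\mathrm{wt}(e_i)=x$ otherwise. A sequence avoids $\underline{12}0$ if there are no indices $2\le i<j$ with $e_j<e_{i-1}<e_i$. Let $\mathcal{PA}_{k,i}(\underline{12}0)$ be the set of $\underline{12}0$-avoiding $e\in\mathcal{PA}$ with $\mathrm{asc}(e)=k$ and last entry equal to $i$, and $f_{k,i}(x)=\sum_{e\in\mathcal{PA}_{k,i}(\underline{12}0)}\mathrm{wt}(e)$. *)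

theory Defs
  imports Main
begin

(* Sequences are lists of naturals, 0-indexed: e ! j corresponds to e_{j+1}. *)

definition asc :: "nat list \<Rightarrow> nat" where
  "asc e = card {l. l + 1 < length e \<and> e ! l < e ! (l + 1)}"

definition inversion_seq :: "nat list \<Rightarrow> bool" where
  "inversion_seq e \<longleftrightarrow> (\<forall>j < length e. e ! j < j + 1)"

definition ascent_seq :: "nat list \<Rightarrow> bool" where
  "ascent_seq e \<longleftrightarrow> inversion_seq e \<and>
     (\<forall>j. 1 \<le> j \<and> j < length e \<longrightarrow> e ! j \<le> asc (take j e) + 1)"

definition primitive :: "nat list \<Rightarrow> bool" where
  "primitive e \<longleftrightarrow> (\<forall>j. j + 1 < length e \<longrightarrow> e ! j \<noteq> e ! (j + 1))"

(* position j is a tail: last entry of its maximal strictly decreasing run *)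
definition is_tail :: "nat list \<Rightarrow> nat \<Rightarrow> bool" where
  "is_tail e j \<longleftrightarrow> j + 1 = length e \<or> \<not> (e ! (j + 1) < e ! j)"

definition wt :: "'a::comm_ring_1 \<Rightarrow> nat list \<Rightarrow> 'a" where
  "wt x e = (\<Prod>j<length e. if is_tail e j then 1 else x)"

(* avoids 12_0 (underlined 12): no 1-indexed 2 \<le> i < j with e_j < e_{i-1} < e_i;
   here p = i-1 (0-indexed i-2), q = j-1 *)
definition avoids_12_0 :: "nat list \<Rightarrow> bool" where
  "avoids_12_0 e \<longleftrightarrow>
     \<not> (\<exists>p q. p + 1 < q \<and> q < length e \<and> e ! q < e ! p \<and> e ! p < e ! (p + 1))"

definition PA_12_0 :: "nat \<Rightarrow> nat \<Rightarrow> nat list set" where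
  "PA_12_0 k i = {e. e \<noteq> [] \<and> ascent_seq e \<and> primitive e \<and> avoids_12_0 e
                     \<and> asc e = k \<and> last e = i}"

definition f :: "nat \<Rightarrow> nat \<Rightarrow> 'a::comm_ring_1 \<Rightarrow> 'a" where
  "f k i x = (\<Sum>e\<in>PA_12_0 k i. wt x e)"

end

theory Submission
  imports Defs
begin


definition V :: "nat list set" where
 "V = {e. e \<noteq> [] \<and> ascent_seq e \<and> primitive e \<and> avoids_12_0 e}"

definition mb :: "nat list \<Rightarrow> nat" where
 "mb e = Max (insert 0 {e!p | p. p+1 < length e \<and> e!p < e!(p+1)})"

lemma mb_le_iff: "mb e \<le> z \<longleftrightarrow> (\<forall>p. p+1 < length e \<and> e!p < e!(p+1) \<longrightarrow> e!p \<le> z)"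
proof -
  have "{e!p | p. p+1 < length e \<and> e!p < e!(p+1)} \<subseteq> set e" by auto
  hence fin: "finite {e!p | p. p+1 < length e \<and> e!p < e!(p+1)}" using finite_subset by blast
  show ?thesis unfolding mb_def using Max_le_iff[of "insert 0 {e!p | p. p+1 < length e \<and> e!p < e!(p+1)}" z] fin
    by auto
qed

lemma mb_snoc_le: assumes "e \<noteq> []"
  shows "mb (e@[i]) \<le> z \<longleftrightarrow> (mb e \<le> z \<and> (last e < i \<longrightarrow> last e \<le> z))"
proof -
  obtain m where m: "length e = Suc m" using assms by (cases e) auto
  have l: "last e = e!m" using m assms by (simp add: last_conv_nth)
  show ?thesis unfolding mb_le_iff
  proof (intro iffI conjI impI allI)
    fix p assume H: "\<forall>p. p + 1 < length (e @ [i]) \<and> (e @ [i]) ! p < (e @ [i]) ! (p + 1) \<longrightarrow> (e @ [i]) ! p \<le> z"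
      and "p + 1 < length e \<and> e ! p < e ! (p + 1)"
    then show "e!p \<le> z" using H[rule_format, of p] by (auto simp: nth_append)
  next
    assume H: "\<forall>p. p + 1 < length (e @ [i]) \<and> (e @ [i]) ! p < (e @ [i]) ! (p + 1) \<longrightarrow> (e @ [i]) ! p \<le> z"
      and "last e < i"
    then show "last e \<le> z" using H[rule_format, of m] m l by (auto simp: nth_append)
  next
    fix p assume H: "(\<forall>p. p + 1 < length e \<and> e ! p < e ! (p + 1) \<longrightarrow> e ! p \<le> z) \<and> (last e < i \<longrightarrow> last e \<le> z)"
      and P: "p + 1 < length (e @ [i]) \<and> (e @ [i]) ! p < (e @ [i]) ! (p + 1)"
    show "(e @ [i]) ! p \<le> z"
    proof (cases "p = m")
      case True then show ?thesis using H P m l by (auto simp: nth_append)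
    next
      case False then show ?thesis using H P m l by (auto simp: nth_append)
    qed
  qed
qed

lemma mb_snoc: assumes "e \<noteq> []"
  shows "mb (e@[i]) = (if last e < i then max (mb e) (last e) else mb e)"
proof -
  let ?M = "mb (e@[i])"
  let ?R = "(if last e < i then max (mb e) (last e) else mb e)"
  have 1: "mb e \<le> ?M \<and> (last e < i \<longrightarrow> last e \<le> ?M)" using mb_snoc_le[OF assms, of i ?M] by simp
  have 2: "?M \<le> ?R" using mb_snoc_le[OF assms, of i ?R] by auto
  from 1 2 show ?thesis by (auto split: if_splits)
qed

lemma asc_snoc: assumes "e \<noteq> []"
  shows "asc (e@[i]) = asc e + (if last e < i then 1 else 0)"
proof -
  obtain m where m: "length e = Suc m" using assms by (cases e) auto
  have l: "last e = e!m" using m assms by (simp add: last_conv_nth)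
  have eq: "{l. l + 1 < length (e@[i]) \<and> (e@[i]) ! l < (e@[i]) ! (l + 1)}
     = {l. l + 1 < length e \<and> e ! l < e ! (l + 1)} \<union> (if last e < i then {m} else {})"
  proof (rule set_eqI)
    fix l show "l \<in> {l. l + 1 < length (e@[i]) \<and> (e@[i]) ! l < (e@[i]) ! (l + 1)} \<longleftrightarrow>
      l \<in> {l. l + 1 < length e \<and> e ! l < e ! (l + 1)} \<union> (if last e < i then {m} else {})"
    proof (cases "l < m")
      case True then show ?thesis using m l by (auto simp: nth_append)
    next
      case False then show ?thesis using m l by (cases "l = m") (auto simp: nth_append)
    qed
  qed
  have fin: "finite {l. l + 1 < length e \<and> e ! l < e ! (l + 1)}" by (rule finite_subset[of _ "{..<length e}"]) auto
  have nm: "m \<notin> {l. l + 1 < length e \<and> e ! l < e ! (l + 1)}" using m by auto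
  show ?thesis unfolding asc_def eq using fin nm by auto
qed

lemma asc_lt: "e \<noteq> [] \<Longrightarrow> asc e < length e"
proof -
  assume "e \<noteq> []"
  then obtain m where m: "length e = Suc m" by (cases e) auto
  have "{l. l + 1 < length e \<and> e ! l < e ! (l + 1)} \<subseteq> {..<m}" using m by auto
  hence "asc e \<le> m" unfolding asc_def by (metis card_lessThan card_mono finite_lessThan)
  thus ?thesis using m by simp
qed

lemma wt_snoc: assumes "e \<noteq> []"
  shows "wt x (e@[i]) = wt x e * (if i < last e then x else 1)"
proof -
  obtain m where m: "length e = Suc m" using assms by (cases e) auto
  have l: "last e = e!m" using m assms by (simp add: last_conv_nth)
  have "wt x (e@[i]) = (\<Prod>j<Suc (Suc m). if is_tail (e@[i]) j then 1 else x)" unfolding wt_def using m by simp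
  also have "\<dots> = (\<Prod>j<m. if is_tail (e@[i]) j then 1 else x) * (if is_tail (e@[i]) m then 1 else x)"
    using m by (simp add: is_tail_def)
  also have "(\<Prod>j<m. if is_tail (e@[i]) j then 1 else x) = (\<Prod>j<m. if is_tail e j then 1 else x)"
    by (rule prod.cong) (use m in \<open>auto simp: is_tail_def nth_append\<close>)
  also have "(if is_tail (e@[i]) m then 1 else x) = (if i < last e then x else 1)"
    using m l by (auto simp: is_tail_def nth_append)
  also have "(\<Prod>j<m. if is_tail e j then 1 else x) = wt x e" unfolding wt_def using m by (simp add: is_tail_def)
  finally show ?thesis .
qed

lemma ascent_snoc: assumes "e \<noteq> []"
  shows "ascent_seq (e@[i]) \<longleftrightarrow> ascent_seq e \<and> i \<le> asc e + 1"
proof -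
  have al: "asc e < length e" using asc_lt assms by blast
  show ?thesis unfolding ascent_seq_def inversion_seq_def
  proof (intro iffI conjI allI impI)
    fix j assume H: "(\<forall>j<length (e @ [i]). (e @ [i]) ! j < j + 1) \<and>
       (\<forall>j. 1 \<le> j \<and> j < length (e @ [i]) \<longrightarrow> (e @ [i]) ! j \<le> asc (take j (e @ [i])) + 1)"
    { assume "j < length e" then show "e!j < j+1" using H[THEN conjunct1, rule_format, of j] by (simp add: nth_append) }
    { assume "1 \<le> j \<and> j < length e" then show "e ! j \<le> asc (take j e) + 1" using H[THEN conjunct2, rule_format, of j]
        by (simp add: nth_append) }
  next
    assume H: "(\<forall>j<length (e @ [i]). (e @ [i]) ! j < j + 1) \<and>
       (\<forall>j. 1 \<le> j \<and> j < length (e @ [i]) \<longrightarrow> (e @ [i]) ! j \<le> asc (take j (e @ [i])) + 1)"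
    show "i \<le> asc e + 1" using H[THEN conjunct2, rule_format, of "length e"] assms by (simp add: Suc_le_eq)
  next
    fix j assume H: "((\<forall>j<length e. e ! j < j + 1) \<and> (\<forall>j. 1 \<le> j \<and> j < length e \<longrightarrow> e ! j \<le> asc (take j e) + 1)) \<and> i \<le> asc e + 1"
    { assume "j < length (e@[i])" then show "(e @ [i]) ! j < j + 1" using H al
        by (cases "j < length e") (auto simp: nth_append) }
    { assume "1 \<le> j \<and> j < length (e @ [i])" then show "(e @ [i]) ! j \<le> asc (take j (e @ [i])) + 1" using H
        by (cases "j < length e") (auto simp: nth_append) }
  qed
qed

lemma primitive_snoc: assumes "e \<noteq> []"
  shows "primitive (e@[i]) \<longleftrightarrow> primitive e \<and> i \<noteq> last e"
proof -
  obtain m where m: "length e = Suc m" using assms by (cases e) auto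
  have l: "last e = e!m" using m assms by (simp add: last_conv_nth)
  show ?thesis unfolding primitive_def
  proof (intro iffI conjI allI impI)
    fix j assume H: "\<forall>j. j + 1 < length (e @ [i]) \<longrightarrow> (e @ [i]) ! j \<noteq> (e @ [i]) ! (j + 1)" and "j + 1 < length e"
    then show "e ! j \<noteq> e ! (j + 1)" using H[rule_format, of j] by (auto simp: nth_append)
  next
    assume H: "\<forall>j. j + 1 < length (e @ [i]) \<longrightarrow> (e @ [i]) ! j \<noteq> (e @ [i]) ! (j + 1)"
    show "i \<noteq> last e" using H[rule_format, of m] m l by (auto simp: nth_append)
  next
    fix j assume H: "(\<forall>j. j + 1 < length e \<longrightarrow> e ! j \<noteq> e ! (j + 1)) \<and> i \<noteq> last e" and "j + 1 < length (e @ [i])"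
    then show "(e @ [i]) ! j \<noteq> (e @ [i]) ! (j + 1)" using m l
      by (cases "j = m") (auto simp: nth_append)
  qed
qed

lemma avoids_snoc: assumes "e \<noteq> []"
  shows "avoids_12_0 (e@[i]) \<longleftrightarrow> avoids_12_0 e \<and> mb e \<le> i"
  unfolding avoids_12_0_def mb_le_iff
proof (intro iffI conjI allI impI notI)
  fix p assume H: "\<not> (\<exists>p q. p + 1 < q \<and> q < length (e @ [i]) \<and> (e @ [i]) ! q < (e @ [i]) ! p \<and> (e @ [i]) ! p < (e @ [i]) ! (p + 1))"
    and P: "p + 1 < length e \<and> e ! p < e ! (p + 1)"
  show "e!p \<le> i"
  proof (rule ccontr)
    assume "\<not> e!p \<le> i"
    then have "p + 1 < length e \<and> length e < length (e@[i]) \<and> (e@[i])!(length e) < (e@[i])!p \<and> (e@[i])!p < (e@[i])!(p+1)"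
      using P by (simp add: nth_append)
    with H show False by blast
  qed
next
  assume H: "\<not> (\<exists>p q. p + 1 < q \<and> q < length (e @ [i]) \<and> (e @ [i]) ! q < (e @ [i]) ! p \<and> (e @ [i]) ! p < (e @ [i]) ! (p + 1))"
   and "\<exists>p q. p + 1 < q \<and> q < length e \<and> e ! q < e ! p \<and> e ! p < e ! (p + 1)"
  then obtain p q where pq: "p + 1 < q \<and> q < length e \<and> e ! q < e ! p \<and> e ! p < e ! (p + 1)" by blast
  then have "p + 1 < q \<and> q < length (e@[i]) \<and> (e@[i])!q < (e@[i])!p \<and> (e@[i])!p < (e@[i])!(p+1)"
    by (simp add: nth_append)
  with H show False by blast
next
  assume H: "\<not> (\<exists>p q. p + 1 < q \<and> q < length e \<and> e ! q < e ! p \<and> e ! p < e ! (p + 1)) \<and>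
    (\<forall>p. p + 1 < length e \<and> e ! p < e ! (p + 1) \<longrightarrow> e ! p \<le> i)"
   and "\<exists>p q. p + 1 < q \<and> q < length (e @ [i]) \<and> (e @ [i]) ! q < (e @ [i]) ! p \<and> (e @ [i]) ! p < (e @ [i]) ! (p + 1)"
  then obtain p q where P: "p + 1 < q \<and> q < length (e @ [i]) \<and> (e @ [i]) ! q < (e @ [i]) ! p \<and> (e @ [i]) ! p < (e @ [i]) ! (p + 1)" by blast
  show False
  proof (cases "q < length e")
    case True then show False using H P by (auto simp: nth_append)
  next
    case False then have "q = length e" using P by simp
    then show False using H P by (auto simp: nth_append split: if_splits)
  qed
qed

lemma V_snoc: assumes "e \<noteq> []"
  shows "e@[i] \<in> V \<longleftrightarrow> e \<in> V \<and> i \<noteq> last e \<and> i \<le> asc e + 1 \<and> mb e \<le> i"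
  using ascent_snoc[OF assms] primitive_snoc[OF assms] avoids_snoc[OF assms] assms
  unfolding V_def by auto

lemma V_single: "[a] \<in> V \<longleftrightarrow> a = 0"
  unfolding V_def ascent_seq_def inversion_seq_def primitive_def avoids_12_0_def by auto

lemma asc_single: "asc [a] = 0" unfolding asc_def by simp
lemma mb_single: "mb [a] = 0" unfolding mb_def by simp
lemma wt_single: "wt x [a] = 1" unfolding wt_def is_tail_def by simp




lemma V_ne: "e \<in> V \<Longrightarrow> e \<noteq> []" unfolding V_def by auto

lemma V_props: "e \<in> V \<Longrightarrow> last e \<le> asc e \<and> mb e \<le> last e \<and> length e + last e \<le> (asc e + 1)^2 + 1"
proof (induction e rule: rev_induct)
  case Nil then show ?case using V_ne by blast
next
  case (snoc i e)
  show ?case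
  proof (cases "e = []")
    case True then show ?thesis using snoc.prems V_single asc_single mb_single by auto
  next
    case False
    have H: "e \<in> V \<and> i \<noteq> last e \<and> i \<le> asc e + 1 \<and> mb e \<le> i" using V_snoc[OF False] snoc.prems by blast
    have IH: "last e \<le> asc e \<and> mb e \<le> last e \<and> length e + last e \<le> (asc e + 1)^2 + 1" using snoc.IH H by blast
    show ?thesis
    proof (cases "last e < i")
      case True
      have "(asc e + 2)^2 = (asc e + 1)^2 + 2 * asc e + 3" by (simp add: power2_eq_square algebra_simps)
      then show ?thesis using True H IH asc_snoc[OF False, of i] mb_snoc[OF False, of i] by simp
    next
      case F: False
      then show ?thesis using H IH asc_snoc[OF False, of i] mb_snoc[OF False, of i] by simp
    qed
  qed
qed

lemma finite_V: "finite {e \<in> V. asc e \<le> k}"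
proof -
  let ?N = "(k+1)^2 + 1"
  have "{e \<in> V. asc e \<le> k} \<subseteq> {xs. set xs \<subseteq> {..?N} \<and> length xs \<le> ?N}"
  proof
    fix e assume e: "e \<in> {e \<in> V. asc e \<le> k}"
    have len: "length e \<le> ?N"
    proof -
      have "length e \<le> (asc e + 1)^2 + 1" using V_props e by fastforce
      also have "\<dots> \<le> ?N" using e by (simp add: power_mono)
      finally show ?thesis .
    qed
    have inv: "inversion_seq e" using e unfolding V_def ascent_seq_def by auto
    have "set e \<subseteq> {..?N}"
    proof
      fix y assume "y \<in> set e"
      then obtain j where "j < length e" "y = e!j" by (auto simp: in_set_conv_nth)
      then show "y \<in> {..?N}" using inv len unfolding inversion_seq_def by fastforce
    qed
    then show "e \<in> {xs. set xs \<subseteq> {..?N} \<and> length xs \<le> ?N}" using len by auto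
  qed
  then show ?thesis using finite_lists_length_le[of "{..?N}" ?N] finite_subset by blast
qed

lemma finite_V_sub: "A \<subseteq> {e \<in> V. asc e \<le> k} \<Longrightarrow> finite A"
  using finite_V finite_subset by blast

definition S :: "nat \<Rightarrow> nat \<Rightarrow> nat \<Rightarrow> 'a::comm_ring_1 \<Rightarrow> 'a" where
 "S k t b x = (\<Sum>e\<in>{e\<in>V. asc e = k \<and> last e = t \<and> mb e = b}. wt x e)"

lemma PA_eq: "PA_12_0 k i = {e\<in>V. asc e = k \<and> last e = i}"
  unfolding PA_12_0_def V_def by auto

lemma f_as_S: "f k t x = (\<Sum>b\<in>{0..t}. S k t b x)"
proof -
  have fin: "finite (PA_12_0 k t)" unfolding PA_eq by (rule finite_V_sub[of _ k]) auto
  have sub: "mb ` PA_12_0 k t \<subseteq> {0..t}" unfolding PA_eq using V_props by fastforce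
  have "f k t x = (\<Sum>b\<in>{0..t}. \<Sum>e\<in>{e. e \<in> PA_12_0 k t \<and> mb e = b}. wt x e)"
    unfolding f_def using sum.group[OF fin _ sub, of "wt x"] by simp
  also have "\<dots> = (\<Sum>b\<in>{0..t}. S k t b x)"
    unfolding S_def PA_eq by (rule sum.cong) (auto intro: sum.cong)
  finally show ?thesis .
qed

lemma S_rec: "S k t b x = (if k=0 \<and> t=0 \<and> b=0 then 1 else 0)
   + (if b \<le> t then x * (\<Sum>j\<in>{t+1..k}. S k j b x) else 0)
   + (if 0<k \<and> b<t \<and> t\<le>k then f (k-1) b x else 0)"
proof -
  define A where "A = {e\<in>V. asc e = k \<and> last e = t \<and> mb e = b}"
  define A1 where "A1 = {e\<in>A. length e = 1}"
  define A2 where "A2 = {e\<in>A. length e \<noteq> 1}"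
  define B where "B = {e. e \<noteq> [] \<and> e@[t] \<in> A}"
  define Bd where "Bd = {e\<in>B. t < last e}"
  define Ba where "Ba = {e\<in>B. last e < t}"
  have finA: "finite A" unfolding A_def by (rule finite_V_sub[of _ k]) auto
  have finB: "finite B"
  proof (rule finite_V_sub[of _ k])
    show "B \<subseteq> {e \<in> V. asc e \<le> k}"
    proof
      fix e assume "e \<in> B"
      then have "e \<noteq> []" "e@[t] \<in> V" "asc (e@[t]) = k" unfolding B_def A_def by auto
      then show "e \<in> {e \<in> V. asc e \<le> k}" using V_snoc asc_snoc by fastforce
    qed
  qed
  have "S k t b x = sum (wt x) A" unfolding S_def A_def ..
  also have "\<dots> = sum (wt x) A1 + sum (wt x) A2"
  proof -
    have "A = A1 \<union> A2" "A1 \<inter> A2 = {}" unfolding A1_def A2_def by auto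
    moreover have "finite A1" "finite A2" using finA unfolding A1_def A2_def by auto
    ultimately show ?thesis by (metis sum.union_disjoint)
  qed
  also have "sum (wt x) A1 = (if k=0 \<and> t=0 \<and> b=0 then 1 else 0)"
  proof -
    have "A1 = (if k=0 \<and> t=0 \<and> b=0 then {[0]} else {})"
    proof (rule set_eqI)
      fix e show "e \<in> A1 \<longleftrightarrow> e \<in> (if k=0 \<and> t=0 \<and> b=0 then {[0]} else {})"
      proof (cases "length e = 1")
        case True
        then obtain a where "e = [a]" by (cases e) auto
        then show ?thesis unfolding A1_def A_def using V_single asc_single mb_single by auto
      next
        case False then show ?thesis unfolding A1_def by auto
      qed
    qed
    then show ?thesis using wt_single[of x 0] by (cases "k=0 \<and> t=0 \<and> b=0") simp_all
  qed
  also have "A2 = (\<lambda>e. e@[t]) ` B"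
  proof (rule set_eqI)
    fix e show "e \<in> A2 \<longleftrightarrow> e \<in> (\<lambda>e. e@[t]) ` B"
    proof
      assume e: "e \<in> A2"
      then have "e \<noteq> []" unfolding A2_def A_def using V_ne by auto
      then obtain e' a where ea: "e = e'@[a]" by (metis rev_exhaust)
      have "a = t" using e ea unfolding A2_def A_def by auto
      moreover have "e' \<noteq> []" using e ea unfolding A2_def by auto
      ultimately show "e \<in> (\<lambda>e. e@[t]) ` B" using e ea unfolding A2_def B_def by auto
    next
      assume "e \<in> (\<lambda>e. e@[t]) ` B"
      then show "e \<in> A2" unfolding A2_def B_def by auto
    qed
  qed
  also have "sum (wt x) ((\<lambda>e. e@[t]) ` B) = (\<Sum>e\<in>B. wt x e * (if t < last e then x else 1))"
  proof -
    have "inj_on (\<lambda>e. e@[t]) B" by (auto simp: inj_on_def)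
    then have "sum (wt x) ((\<lambda>e. e@[t]) ` B) = (\<Sum>e\<in>B. wt x (e@[t]))" by (simp add: sum.reindex)
    also have "\<dots> = (\<Sum>e\<in>B. wt x e * (if t < last e then x else 1))"
      by (rule sum.cong) (auto simp: B_def wt_snoc)
    finally show ?thesis .
  qed
  also have "(\<Sum>e\<in>B. wt x e * (if t < last e then x else 1)) =
     (\<Sum>e\<in>Bd. wt x e * (if t < last e then x else 1)) + (\<Sum>e\<in>Ba. wt x e * (if t < last e then x else 1))"
  proof -
    have "B = Bd \<union> Ba" "Bd \<inter> Ba = {}" unfolding Bd_def Ba_def B_def A_def using V_snoc by auto
    moreover have "finite Bd" "finite Ba" using finB unfolding Bd_def Ba_def by auto
    ultimately show ?thesis by (metis (no_types, lifting) sum.union_disjoint)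
  qed
  also have "(\<Sum>e\<in>Ba. wt x e * (if t < last e then x else 1)) = (\<Sum>e\<in>Ba. wt x e)"
    by (rule sum.cong) (auto simp: Ba_def)
  also have "Ba = (if 0<k \<and> b<t \<and> t\<le>k then PA_12_0 (k-1) b else {})"
  proof (rule set_eqI)
    fix e show "e \<in> Ba \<longleftrightarrow> e \<in> (if 0<k \<and> b<t \<and> t\<le>k then PA_12_0 (k-1) b else {})"
    proof
      assume e: "e \<in> Ba"
      then have ne: "e \<noteq> []" and lt: "last e < t" and inA: "e@[t] \<in> A" unfolding Ba_def B_def by auto
      have H: "e \<in> V \<and> t \<noteq> last e \<and> t \<le> asc e + 1 \<and> mb e \<le> t" using inA V_snoc[OF ne] unfolding A_def by blast
      have P: "mb e \<le> last e" using V_props H by blast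
      show "e \<in> (if 0<k \<and> b<t \<and> t\<le>k then PA_12_0 (k-1) b else {})"
        using inA H P lt asc_snoc[OF ne, of t] mb_snoc[OF ne, of t] unfolding A_def PA_eq by auto
    next
      assume e: "e \<in> (if 0<k \<and> b<t \<and> t\<le>k then PA_12_0 (k-1) b else {})"
      then have c: "0<k" "b<t" "t \<le> k" and eV: "e \<in> V" "asc e = k - 1" "last e = b"
        unfolding PA_eq by (auto split: if_splits)
      have ne: "e \<noteq> []" using eV V_ne by blast
      have P: "mb e \<le> last e" using V_props eV by blast
      have "e@[t] \<in> V" using V_snoc[OF ne] eV c P by auto
      then show "e \<in> Ba" unfolding Ba_def B_def A_def
        using ne eV c P asc_snoc[OF ne, of t] mb_snoc[OF ne, of t] by auto
    qed
  qed
  also have "(\<Sum>e\<in>(if 0<k \<and> b<t \<and> t\<le>k then PA_12_0 (k-1) b else {}). wt x e)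
       = (if 0<k \<and> b<t \<and> t\<le>k then f (k-1) b x else 0)" unfolding f_def by simp
  also have "(\<Sum>e\<in>Bd. wt x e * (if t < last e then x else 1)) = x * (\<Sum>e\<in>Bd. wt x e)"
    by (simp add: sum_distrib_left Bd_def mult.commute)
  also have "Bd = (if b \<le> t then {e\<in>V. asc e = k \<and> mb e = b \<and> t < last e} else {})"
  proof (rule set_eqI)
    fix e show "e \<in> Bd \<longleftrightarrow> e \<in> (if b \<le> t then {e\<in>V. asc e = k \<and> mb e = b \<and> t < last e} else {})"
    proof
      assume e: "e \<in> Bd"
      then have ne: "e \<noteq> []" and lt: "t < last e" and inA: "e@[t] \<in> A" unfolding Bd_def B_def by auto
      have H: "e \<in> V \<and> t \<noteq> last e \<and> t \<le> asc e + 1 \<and> mb e \<le> t" using inA V_snoc[OF ne] unfolding A_def by blast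
      show "e \<in> (if b \<le> t then {e\<in>V. asc e = k \<and> mb e = b \<and> t < last e} else {})"
        using inA H lt asc_snoc[OF ne, of t] mb_snoc[OF ne, of t] unfolding A_def by auto
    next
      assume e: "e \<in> (if b \<le> t then {e\<in>V. asc e = k \<and> mb e = b \<and> t < last e} else {})"
      then have c: "b \<le> t" and eV: "e \<in> V" "asc e = k" "mb e = b" "t < last e"
        by (auto split: if_splits)
      have ne: "e \<noteq> []" using eV V_ne by blast
      have P: "last e \<le> asc e" using V_props eV by blast
      have "e@[t] \<in> V" using V_snoc[OF ne] eV c P by auto
      then show "e \<in> Bd" unfolding Bd_def B_def A_def
        using ne eV c P asc_snoc[OF ne, of t] mb_snoc[OF ne, of t] by auto
    qed
  qed
  also have "x * (\<Sum>e\<in>(if b \<le> t then {e\<in>V. asc e = k \<and> mb e = b \<and> t < last e} else {}). wt x e)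
     = (if b \<le> t then x * (\<Sum>j\<in>{t+1..k}. S k j b x) else 0)"
  proof (cases "b \<le> t")
    case True
    let ?D = "{e\<in>V. asc e = k \<and> mb e = b \<and> t < last e}"
    have fin: "finite ?D" by (rule finite_V_sub[of _ k]) auto
    have sub: "last ` ?D \<subseteq> {t+1..k}" using V_props by fastforce
    have "(\<Sum>e\<in>?D. wt x e) = (\<Sum>j\<in>{t+1..k}. \<Sum>e\<in>{e. e \<in> ?D \<and> last e = j}. wt x e)"
      using sum.group[OF fin _ sub, of "wt x"] by simp
    also have "\<dots> = (\<Sum>j\<in>{t+1..k}. S k j b x)"
      unfolding S_def by (rule sum.cong) (auto intro: sum.cong)
    finally show ?thesis using True by simp
  next
    case False then show ?thesis by simp
  qed
  finally show ?thesis by (simp add: algebra_simps)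
qed




definition Fc :: "nat \<Rightarrow> nat \<Rightarrow> 'a::comm_ring_1 \<Rightarrow> 'a" where
 "Fc k t x = (1+x)^(t choose 2) * (\<Prod>l\<in>{t+1..k}. (1+x)^l - 1)"

lemma geo: "t \<le> k \<Longrightarrow> x * (\<Sum>j\<in>{t+1..k}. (1+x)^(k-j)) = (1+x)^(k-t) - (1::'a::comm_ring_1)"
proof (induction "k-t" arbitrary: t)
  case 0 then show ?case by simp
next
  case (Suc n)
  then have tk: "t < k" by simp
  have IH: "x * (\<Sum>j\<in>{t+1+1..k}. (1+x)^(k-j)) = (1+x)^(k-(t+1)) - 1" using Suc tk by simp
  have "{t+1..k} = insert (t+1) {t+1+1..k}" using tk by auto
  then have "(\<Sum>j\<in>{t+1..k}. (1+x)^(k-j)) = (1+x)^(k-(t+1)) + (\<Sum>j\<in>{t+1+1..k}. (1+x)^(k-j))" by simp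
  then have "x * (\<Sum>j\<in>{t+1..k}. (1+x)^(k-j)) = x * (1+x)^(k-(t+1)) + ((1+x)^(k-(t+1)) - 1)"
    using IH by (simp add: distrib_left)
  also have "\<dots> = (1+x) * (1+x)^(k-(t+1)) - 1" by (simp add: algebra_simps)
  also have "\<dots> = (1+x)^(k-t) - 1" using tk by (metis Suc_diff_Suc Suc_eq_plus1 power_Suc)
  finally show ?case .
qed

lemma choose2_Suc: "Suc t choose 2 = (t choose 2) + t"
  by (simp add: numeral_2_eq_2)

lemma Fc_step: "Suc t \<le> m \<Longrightarrow> Fc m t x = (1+x)^(t choose 2) * ((1+x)^(Suc t) - 1) * (\<Prod>l\<in>{Suc t+1..m}. (1+x)^l - 1)"
proof -
  assume a: "Suc t \<le> m"
  have "{t+1..m} = insert (Suc t) {Suc t+1..m}" using a by auto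
  then show ?thesis unfolding Fc_def by (simp add: mult.assoc)
qed

lemma Fc_sum: "t \<le> m \<Longrightarrow> (\<Sum>b<t. Fc m b x) = ((1+x)^t - 1) * Fc m t (x::'a::comm_ring_1)"
proof (induction t)
  case 0 then show ?case by simp
next
  case (Suc t)
  have "(\<Sum>b<Suc t. Fc m b x) = ((1+x)^t - 1) * Fc m t x + Fc m t x" using Suc by simp
  also have "\<dots> = (1+x)^t * Fc m t x" by (simp add: algebra_simps)
  also have "\<dots> = (1+x)^t * ((1+x)^(t choose 2) * ((1+x)^(Suc t) - 1) * (\<Prod>l\<in>{Suc t+1..m}. (1+x)^l - 1))"
    using Fc_step[OF Suc.prems, of x] by simp
  also have "\<dots> = ((1+x)^(Suc t) - 1) * ((1+x)^(Suc t choose 2) * (\<Prod>l\<in>{Suc t+1..m}. (1+x)^l - 1))"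
    by (simp add: choose2_Suc power_add algebra_simps)
  also have "\<dots> = ((1+x)^(Suc t) - 1) * Fc m (Suc t) x" unfolding Fc_def by simp
  finally show ?case .
qed

lemma Fc_diag: "Fc k k x = (1+x)^(k choose 2)" unfolding Fc_def by simp

lemma Fc_succ: "t < Suc m \<Longrightarrow> Fc (Suc m) t x = Fc m t x * ((1+x)^(Suc m) - 1)"
  unfolding Fc_def by (simp add: prod.nat_ivl_Suc' algebra_simps)

lemma Fc_total: "(\<Sum>b<Suc m. Fc m b x) = (1+x)^(Suc m choose 2)"
proof -
  have "(\<Sum>b<Suc m. Fc m b x) = ((1+x)^m - 1) * Fc m m x + Fc m m x" using Fc_sum[of m m x] by simp
  also have "\<dots> = (1+x)^m * (1+x)^(m choose 2)" by (simp add: Fc_diag algebra_simps)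
  also have "\<dots> = (1+x)^(Suc m choose 2)" by (simp add: choose2_Suc power_add)
  finally show ?thesis .
qed




definition Sc :: "nat \<Rightarrow> nat \<Rightarrow> nat \<Rightarrow> 'a::comm_ring_1 \<Rightarrow> 'a" where
 "Sc k t b x = (if k = 0 then (if t = 0 \<and> b = 0 then 1 else 0)
    else if b \<le> t \<and> t \<le> k \<and> b < k then Fc (k-1) b x * (if t = b then (1+x)^(k-b) - 1 else (1+x)^(k-t)) else 0)"

lemma S_closed:
  fixes x :: "'a::comm_ring_1"
  assumes hf: "\<And>b. 0 < k \<Longrightarrow> b \<le> k - 1 \<Longrightarrow> f (k-1) b x = Fc (k-1) b x"
  shows "S k t b x = Sc k t b x"
proof (cases "t \<le> k")
  case False
  then show ?thesis using S_rec[of k t b x] unfolding Sc_def by auto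
next
  case True
  have "\<forall>t. k - t = n \<longrightarrow> t \<le> k \<longrightarrow> S k t b x = Sc k t b x" for n
  proof (induction n rule: less_induct)
    case (less n)
    show ?case
    proof (intro allI impI)
      fix t assume n: "k - t = n" and tk: "t \<le> k"
      have sumeq: "(\<Sum>j\<in>{t+1..k}. S k j b x) = (\<Sum>j\<in>{t+1..k}. Sc k j b x)"
      proof (rule sum.cong)
        fix j assume "j \<in> {t+1..k}"
        then show "S k j b x = Sc k j b x" using less.IH[of "k-j"] n by auto
      qed simp
      have rec: "S k t b x = (if k=0 \<and> t=0 \<and> b=0 then 1 else 0)
          + (if b \<le> t then x * (\<Sum>j\<in>{t+1..k}. Sc k j b x) else 0)
          + (if 0<k \<and> b<t \<and> t\<le>k then f (k-1) b x else 0)"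
        using S_rec[of k t b x] sumeq by simp
      show "S k t b x = Sc k t b x"
      proof (cases "k = 0")
        case True then show ?thesis using rec tk unfolding Sc_def by auto
      next
        case kpos: False
        show ?thesis
        proof (cases "b \<le> t \<and> b < k")
          case False
          then have "b > t \<or> (b = k \<and> t = k)" using tk by auto
          then show ?thesis using rec kpos unfolding Sc_def by auto
        next
          case bt: True
          have "(\<Sum>j\<in>{t+1..k}. Sc k j b x) = (\<Sum>j\<in>{t+1..k}. Fc (k-1) b x * (1+x)^(k-j))"
            by (rule sum.cong) (use bt kpos in \<open>auto simp: Sc_def\<close>)
          also have "\<dots> = Fc (k-1) b x * (\<Sum>j\<in>{t+1..k}. (1+x)^(k-j))" by (simp add: sum_distrib_left)
          finally have "x * (\<Sum>j\<in>{t+1..k}. Sc k j b x) = Fc (k-1) b x * (x * (\<Sum>j\<in>{t+1..k}. (1+x)^(k-j)))"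
            by (simp add: mult.left_commute)
          also have "\<dots> = Fc (k-1) b x * ((1+x)^(k-t) - 1)" using geo[OF tk, of x] by simp
          finally have "x * (\<Sum>j\<in>{t+1..k}. Sc k j b x) = Fc (k-1) b x * ((1+x)^(k-t) - 1)" .
          then have rec2: "S k t b x = Fc (k-1) b x * ((1+x)^(k-t) - 1) + (if b<t then Fc (k-1) b x else 0)"
            using rec bt kpos tk hf[of b] by auto
          show ?thesis
          proof (cases "t = b")
            case True then show ?thesis using rec2 bt kpos tk unfolding Sc_def by simp
          next
            case False then show ?thesis using rec2 bt kpos tk unfolding Sc_def by (simp add: algebra_simps)
          qed
        qed
      qed
    qed
  qed
  then show ?thesis using True by blast
qed

lemma main: "t \<le> k \<Longrightarrow> f k t x = Fc k t (x::'a::comm_ring_1)"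
proof (induction k arbitrary: t)
  case 0
  then have "f 0 t x = (\<Sum>b\<in>{0..0}. S 0 0 b x)" using f_as_S[of 0 0 x] by simp
  also have "\<dots> = 1" using S_closed[of 0 x 0 0] unfolding Sc_def by simp
  finally show ?case using 0 unfolding Fc_def by (simp add: binomial_eq_0)
next
  case (Suc m)
  let ?y = "1 + x"
  have hf: "\<And>b. 0 < Suc m \<Longrightarrow> b \<le> Suc m - 1 \<Longrightarrow> f (Suc m - 1) b x = Fc (Suc m - 1) b x" using Suc.IH by simp
  have "f (Suc m) t x = (\<Sum>b\<in>{0..t}. Sc (Suc m) t b x)" using f_as_S[of "Suc m" t x] S_closed[OF hf] by simp
  also have "\<dots> = (\<Sum>b<t. Sc (Suc m) t b x) + Sc (Suc m) t t x"
    by (simp add: atLeast0AtMost lessThan_Suc_atMost[symmetric])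
  also have "(\<Sum>b<t. Sc (Suc m) t b x) = (\<Sum>b<t. Fc m b x * ?y^(Suc m - t))"
    by (rule sum.cong) (use Suc.prems in \<open>auto simp: Sc_def\<close>)
  also have "\<dots> = ?y^(Suc m - t) * (\<Sum>b<t. Fc m b x)" by (simp add: sum_distrib_right mult.commute)
  finally have E: "f (Suc m) t x = ?y^(Suc m - t) * (\<Sum>b<t. Fc m b x) + Sc (Suc m) t t x" .
  show ?case
  proof (cases "t = Suc m")
    case True
    have "Sc (Suc m) t t x = 0" using True unfolding Sc_def by simp
    then show ?thesis using E True Fc_total[of m x] Fc_diag[of "Suc m" x] by simp
  next
    case False
    then have tm: "t \<le> m" using Suc.prems by simp
    have "Sc (Suc m) t t x = Fc m t x * (?y^(Suc m - t) - 1)" using tm unfolding Sc_def by simp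
    then have "f (Suc m) t x = ?y^(Suc m - t) * (?y^t - 1) * Fc m t x + Fc m t x * (?y^(Suc m - t) - 1)"
      using E Fc_sum[OF tm, of x] by (simp add: mult.assoc)
    also have "\<dots> = Fc m t x * (?y^(Suc m - t) * ?y^t - 1)" by (simp add: algebra_simps)
    also have "?y^(Suc m - t) * ?y^t = ?y^(Suc m)" using tm by (simp add: power_add[symmetric])
    finally have "f (Suc m) t x = Fc m t x * (?y^(Suc m) - 1)" .
    then show ?thesis using Fc_succ[of t m x] tm by simp
  qed
qed

theorem theorem2p3:
  fixes x :: "'a::comm_ring_1" and k i :: nat
  assumes "i \<le> k"
  shows "f k i x = (1 + x) ^ (i choose 2) * (\<Prod>l\<in>{i+1..k}. (1 + x) ^ l - 1)"
  using main[OF assms] unfolding Fc_def by simp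


end
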